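(* Let $L=\mathbb{Z}\alpha$ with $\langle\alpha,\alpha\rangle=-2k$, $k\in\mathbb{Z}_{>0}$, and let $m\in\mathbb{Z}_{>0}$. In $V_L^+$, consider the elements $f_1=\alpha(-5)F^m$, $f_2=\alpha(-4)\alpha(-1)E^m$, $f_3=\alpha(-3)\alpha(-2)E^m$, $f_4=\alpha(-3)\alpha(-1)^2F^m$, $f_5=\alpha(-2)^2\alpha(-1)F^m$, $f_6=\alpha(-2)\alpha(-1)^3E^m$, $f_7=\alpha(-1)^5F^m$ and $h_1=\alpha(-3)F^m$, $h_2=\alpha(-2)\alpha(-1)E^m$, $h_3=\alpha(-1)^3F^m$. Then the eleven vectors $L(-1)f_i$ ($1\le i\le 7$), $L(-3)h_j$ ($1\le j\le 3$) and $(\alpha(-1)^4\mathbf{1})_{-3}E^m$ form a basis of the weight space $V_L^+(m,-km^2+6)$.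
   Context: Let $L$ be an even lattice with non-degenerate symmetric $\mathbb{Z}$-bilinear form $\langle\cdot,\cdot\rangle$, $\mathfrak{h}=\mathbb{C}\otimes_{\mathbb{Z}}L$, $M(1)$ the Heisenberg vertex algebra (free bosons) generated by $h(-n)$, $h\in\mathfrak{h}$, $n>0$, with $[h(m),h'(n)]=m\langle h,h'\rangle\delta_{m+n,0}$, and $V_L=M(1)\otimes\mathbb{C}[L]$ the lattice vertex algebra (defined with a 2-cocycle on $L$), with conformal vector $\omega=\frac12\sum_i h_i(-1)^2\mathbf{1}$ for an orthonormal basis $\{h_i\}$ of $\mathfrak{h}$, $Y(\omega,z)=\sum_nL(n)z^{-n-2}$. The weight of $\beta_1(-n_1)\cdots\beta_r(-n_r)e^{\beta}$ is $n_1+\cdots+n_r+\langle\beta,\beta\rangle/2$. Let $\theta$ be the automorphism of $V_L$ with $\theta(\beta_1(-n_1)\cdots\beta_r(-n_r)e^{\beta})=(-1)^r\beta_1(-n_1)\cdots\beta_r(-n_r)e^{-\beta}$; $V_L^+$ (resp. $M(1)^\pm$) denotes the $+1$-eigenspace of $\theta$ on $V_L$ (resp. $\pm1$-eigenspaces on $M(1)$). For $u\in V_L$, $Y(u,z)=\sum_n u_nz^{-n-1}$. For $L=\mathbb{Z}\alpha$ and $m\in\mathbb{Z}_{>0}$, set $E^m=e^{m\alpha}+e^{-m\alpha}$, $F^m=e^{m\alpha}-e^{-m\alpha}$, $V_L^+(m)=M(1)^+\otimes E^m\oplus M(1)^-\otimes F^m$, and $V_L^+(m,n)$ the weight-$n$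 subspace of $V_L^+(m)$. An expression like $\alpha(-2)\alpha(-1)E^m$ means $\alpha(-2)\alpha(-1)\mathbf{1}\otimes E^m$. *)

theory Defs
  imports Complex_Main "HOL-Library.Multiset"
begin

text \<open>Model of the rank-one lattice vertex algebra V_L, L = Z alpha, with norm c = <alpha,alpha>.
  The basis vector alpha(-n_1)...alpha(-n_r) e^{j alpha} (n_i > 0) is indexed by the pair
  (multiset {n_1,...,n_r}, j).  For rank one the
  2-cocycle can be taken trivial.\<close>

type_synonym vec = "nat multiset \<times> int \<Rightarrow> complex"

definition vzero :: vec where "vzero = (\<lambda>_. 0)"
definition vadd :: "vec \<Rightarrow> vec \<Rightarrow> vec" where "vadd u v = (\<lambda>x. u x + v x)"
definition vscale :: "complex \<Rightarrow> vec \<Rightarrow> vec" where "vscale a v = (\<lambda>x. a * v x)"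

definition fsum :: "'i set \<Rightarrow> ('i \<Rightarrow> vec) \<Rightarrow> vec" where
  "fsum S f = (\<lambda>x. \<Sum>i\<in>{i\<in>S. f i x \<noteq> 0}. f i x)"

definition creat :: "nat \<Rightarrow> vec \<Rightarrow> vec" where
  "creat n v = (\<lambda>(M, j). if n \<in># M then v (M - {#n#}, j) else 0)"
definition annih :: "complex \<Rightarrow> nat \<Rightarrow> vec \<Rightarrow> vec" where
  "annih c n v = (\<lambda>(M, j). of_nat n * c * of_nat (count M n + 1) * v (add_mset n M, j))"
definition zeromode :: "complex \<Rightarrow> vec \<Rightarrow> vec" where
  "zeromode c v = (\<lambda>(M, j). of_int j * c * v (M, j))"
definition amode :: "complex \<Rightarrow> int \<Rightarrow> vec \<Rightarrow> vec" where
  "amode c n v = (if n < 0 then creat (nat (- n)) v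
                  else if n = 0 then zeromode c v else annih c (nat n) v)"

text \<open>Normally ordered product :alpha(n_1)...alpha(n_r): (creation modes to the left).\<close>
definition normal_prod :: "complex \<Rightarrow> int list \<Rightarrow> vec \<Rightarrow> vec" where
  "normal_prod c ns v = foldr (amode c) (sort ns) v"

text \<open>The mode u_p of u = alpha(-1)^r 1, i.e. Y(u,z) = :alpha(z)^r: = sum_p u_p z^{-p-1}.\<close>
definition alpha_pow_mode :: "complex \<Rightarrow> nat \<Rightarrow> int \<Rightarrow> vec \<Rightarrow> vec" where
  "alpha_pow_mode c r p v =
     fsum {ns. length ns = r \<and> sum_list ns = p + 1 - int r} (\<lambda>ns. normal_prod c ns v)"

text \<open>Virasoro modes: omega = (1/(2c)) alpha(-1)^2 1, L(n) = omega_{n+1}.\<close>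
definition Lmode :: "complex \<Rightarrow> int \<Rightarrow> vec \<Rightarrow> vec" where
  "Lmode c n v = vscale (1 / (2 * c)) (alpha_pow_mode c 2 (n + 1) v)"

definition Fock :: "(nat multiset \<Rightarrow> complex) set" where
  "Fock = {u. finite {M. u M \<noteq> 0} \<and> (\<forall>M. u M \<noteq> 0 \<longrightarrow> 0 \<notin># M)}"
definition theta_M1 :: "(nat multiset \<Rightarrow> complex) \<Rightarrow> (nat multiset \<Rightarrow> complex)" where
  "theta_M1 u = (\<lambda>M. (-1) ^ size M * u M)"
definition M1plus :: "(nat multiset \<Rightarrow> complex) set" where
  "M1plus = {u \<in> Fock. theta_M1 u = u}"
definition M1minus :: "(nat multiset \<Rightarrow> complex) set" where
  "M1minus = {u \<in> Fock. theta_M1 u = (\<lambda>M. - u M)}"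

definition vacuum :: "nat multiset \<Rightarrow> complex" where
  "vacuum = (\<lambda>M. if M = {#} then 1 else 0)"

text \<open>Elements of C[L] as coefficient functions j |-> coefficient of e^{j alpha}.\<close>
definition E_lat :: "int \<Rightarrow> int \<Rightarrow> complex" where
  "E_lat m = (\<lambda>j. (if j = m then 1 else 0) + (if j = - m then 1 else 0))"
definition F_lat :: "int \<Rightarrow> int \<Rightarrow> complex" where
  "F_lat m = (\<lambda>j. (if j = m then 1 else 0) - (if j = - m then 1 else 0))"

definition tensor :: "(nat multiset \<Rightarrow> complex) \<Rightarrow> (int \<Rightarrow> complex) \<Rightarrow> vec" where
  "tensor u g = (\<lambda>(M, j). u M * g j)"

definition Evec :: "int \<Rightarrow> vec" where "Evec m = tensor vacuum (E_lat m)"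
definition Fvec :: "int \<Rightarrow> vec" where "Fvec m = tensor vacuum (F_lat m)"

definition VLplus :: "int \<Rightarrow> vec set" where
  "VLplus m = {vadd (tensor u (E_lat m)) (tensor u' (F_lat m)) | u u'. u \<in> M1plus \<and> u' \<in> M1minus}"

text \<open>Weight of alpha(-n_1)...alpha(-n_r) e^{j alpha} when <alpha,alpha> = -2k.\<close>
definition wt :: "int \<Rightarrow> nat multiset \<times> int \<Rightarrow> int" where
  "wt k x = int (sum_mset (fst x)) - k * (snd x)\<^sup>2"

definition VLplus_wt :: "int \<Rightarrow> int \<Rightarrow> int \<Rightarrow> vec set" where
  "VLplus_wt k m n = {v \<in> VLplus m. \<forall>x. v x \<noteq> 0 \<longrightarrow> wt k x = n}"

definition lincomb :: "(nat \<Rightarrow> complex) \<Rightarrow> vec list \<Rightarrow> vec" where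
  "lincomb a bs = (\<lambda>x. \<Sum>i<length bs. a i * (bs ! i) x)"

definition is_basis :: "vec set \<Rightarrow> vec list \<Rightarrow> bool" where
  "is_basis W bs \<longleftrightarrow> set bs \<subseteq> W
     \<and> (\<forall>a. lincomb a bs = vzero \<longrightarrow> (\<forall>i<length bs. a i = 0))
     \<and> (\<forall>v\<in>W. \<exists>a. v = lincomb a bs)"

end

theory Submission
  imports Defs "Jordan_Normal_Form.Determinant"
begin


definition vsum :: "(complex \<times> nat multiset \<times> int) list \<Rightarrow> (nat multiset \<times> int \<Rightarrow> complex)" where
  "vsum l = (\<lambda>x. sum_list (map (\<lambda>(a,y). if y = x then a else 0) l))"

lemma vsum_Nil: "vsum [] = vzero"
  by (simp add: vsum_def vzero_def)

lemma vsum_Cons_app: "vsum ((a,y)#l) x = (if y = x then a else 0) + vsum l x"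
  by (simp add: vsum_def)

lemma vsum_zero_entry[simp]: "vsum ((0,y)#l) = vsum l"
  by (rule ext) (simp add: vsum_Cons_app)

lemma vsum_append: "vsum (l1 @ l2) x = vsum l1 x + vsum l2 x"
  by (simp add: vsum_def)

lemma vsum_notin: "x \<notin> set (map snd l) \<Longrightarrow> vsum l x = 0"
  by (induction l) (auto simp: vsum_def)

lemma vsum_eqI:
  assumes "\<forall>y\<in>set (map snd L1 @ map snd L2). vsum L1 y = vsum L2 y"
  shows "vsum L1 = vsum L2"
proof (rule ext)
  fix x show "vsum L1 x = vsum L2 x"
    using assms vsum_notin[of x L1] vsum_notin[of x L2]
    by (cases "x \<in> set (map snd L1 @ map snd L2)") auto
qed

definition lcreat :: "nat \<Rightarrow> (complex \<times> nat multiset \<times> int) list \<Rightarrow> (complex \<times> nat multiset \<times> int) list" where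
  "lcreat n l = map (\<lambda>(a,M,j). (a, add_mset n M, j)) l"
definition lannih :: "complex \<Rightarrow> nat \<Rightarrow> (complex \<times> nat multiset \<times> int) list \<Rightarrow> (complex \<times> nat multiset \<times> int) list" where
  "lannih c n l = map (\<lambda>(a,M,j). (of_nat n * c * of_nat (count M n) * a, M - {#n#}, j)) l"
definition lzero :: "complex \<Rightarrow> (complex \<times> nat multiset \<times> int) list \<Rightarrow> (complex \<times> nat multiset \<times> int) list" where
  "lzero c l = map (\<lambda>(a,M,j). (of_int j * c * a, M, j)) l"
definition lamode :: "complex \<Rightarrow> int \<Rightarrow> (complex \<times> nat multiset \<times> int) list \<Rightarrow> (complex \<times> nat multiset \<times> int) list" where
  "lamode c n l = (if n < 0 then lcreat (nat (- n)) l else if n = 0 then lzero c l else lannih c (nat n) l)"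
definition lscale :: "complex \<Rightarrow> (complex \<times> nat multiset \<times> int) list \<Rightarrow> (complex \<times> nat multiset \<times> int) list" where
  "lscale s l = map (\<lambda>(a,y). (s*a, y)) l"

lemma vsum_lscale: "vsum (lscale s l) x = s * vsum l x"
  by (induction l) (auto simp: vsum_def lscale_def algebra_simps)

lemma creat_vsum: "creat n (vsum l) = vsum (lcreat n l)"
proof (rule ext, clarify)
  fix M j show "creat n (vsum l) (M, j) = vsum (lcreat n l) (M, j)"
  proof (induction l)
    case Nil then show ?case by (simp add: creat_def vsum_def lcreat_def)
  next
    case (Cons t l)
    obtain a M' j' where t: "t = (a, M', j')" by (cases t) auto
    have "(add_mset n M' = M) = (n \<in># M \<and> M' = M - {#n#})"
      by (metis add_mset_remove_trivial insert_DiffM union_single_eq_member)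
    with Cons show ?case
      by (auto simp: creat_def vsum_def lcreat_def t)
  qed
qed

lemma annih_vsum: "annih c n (vsum l) = vsum (lannih c n l)"
proof (rule ext, clarify)
  fix M j show "annih c n (vsum l) (M, j) = vsum (lannih c n l) (M, j)"
  proof (induction l)
    case Nil then show ?case by (simp add: annih_def vsum_def lannih_def)
  next
    case (Cons t l)
    obtain a M' j' where t: "t = (a, M', j')" by (cases t) auto
    have IH: "annih c n (vsum l) (M, j) = vsum (lannih c n l) (M, j)" by (rule Cons.IH)
    have "of_nat n * c * of_nat (count M n + 1) * (if (M', j') = (add_mset n M, j) then a else 0)
        = (if (M' - {#n#}, j') = (M, j) then of_nat n * c * of_nat (count M' n) * a else 0)"
    proof (cases "n \<in># M'")
      case True
      then have "(M' = add_mset n M) = (M' - {#n#} = M)"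
        by (metis add_mset_remove_trivial insert_DiffM)
      moreover have "M' = add_mset n M \<Longrightarrow> count M' n = count M n + 1" by simp
      ultimately show ?thesis by auto
    next
      case False
      then show ?thesis by (auto simp: count_eq_zero_iff)
    qed
    moreover have "annih c n (vsum (t#l)) (M, j) = of_nat n * c * of_nat (count M n + 1) * (if (M', j') = (add_mset n M, j) then a else 0) + annih c n (vsum l) (M, j)"
      by (simp add: annih_def vsum_Cons_app t algebra_simps)
    moreover have "vsum (lannih c n (t#l)) (M, j) = (if (M' - {#n#}, j') = (M, j) then of_nat n * c * of_nat (count M' n) * a else 0) + vsum (lannih c n l) (M, j)"
      by (simp add: lannih_def vsum_Cons_app t)
    ultimately show ?case using IH by simp
  qed
qed

lemma zeromode_vsum: "zeromode c (vsum l) = vsum (lzero c l)"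
proof (rule ext, clarify)
  fix M j show "zeromode c (vsum l) (M, j) = vsum (lzero c l) (M, j)"
    by (induction l) (auto simp: zeromode_def vsum_def lzero_def algebra_simps)
qed

lemma amode_vsum: "amode c n (vsum l) = vsum (lamode c n l)"
  by (simp add: amode_def lamode_def creat_vsum annih_vsum zeromode_vsum)

lemma foldr_amode_vsum: "foldr (amode c) ns (vsum l) = vsum (foldr (lamode c) ns l)"
  by (induction ns) (simp_all add: amode_vsum)

lemma vscale_vsum: "vscale s (vsum l) = vsum (lscale s l)"
  by (rule ext) (simp add: vscale_def vsum_lscale)




lemma amode_vzero: "amode c n vzero = vzero"
  by (rule ext) (auto simp: amode_def creat_def annih_def zeromode_def vzero_def)

lemma foldr_amode_vanish:
  fixes B :: int
  assumes bnd: "\<forall>M j. v (M,j) \<noteq> 0 \<longrightarrow> (\<forall>x\<in>#M. int x \<le> B)" and B: "B \<ge> 0"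
  shows "sorted xs \<Longrightarrow> xs \<noteq> [] \<Longrightarrow> last xs > B \<Longrightarrow> foldr (amode c) xs v = vzero"
proof (induction xs)
  case Nil then show ?case by simp
next
  case (Cons a ys)
  show ?case
  proof (cases "ys = []")
    case True
    then have a: "a > B" using Cons by simp
    then have "a > 0" using B by simp
    have "annih c (nat a) v = vzero"
    proof (rule ext, clarify)
      fix M j
      have "v (add_mset (nat a) M, j) = 0"
        using bnd a \<open>a > 0\<close> by force
      then show "annih c (nat a) v (M, j) = vzero (M, j)" by (simp add: annih_def vzero_def)
    qed
    then show ?thesis using True \<open>a > 0\<close> by (simp add: amode_def)
  next
    case False
    then have "foldr (amode c) ys v = vzero" using Cons by simp
    then show ?thesis by (simp add: amode_vzero)
  qed
qed

lemma vsum_bnd: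
  assumes "\<forall>(a,M,j)\<in>set l. \<forall>x\<in>#M. int x \<le> B"
  shows "\<forall>M j. vsum l (M,j) \<noteq> 0 \<longrightarrow> (\<forall>x\<in>#M. int x \<le> B)"
proof (intro allI impI)
  fix M j assume "vsum l (M, j) \<noteq> 0"
  then have "(M,j) \<in> set (map snd l)" using vsum_notin by blast
  then show "\<forall>x\<in>#M. int x \<le> B" using assms by auto
qed

lemma sorted_le_last: "sorted xs \<Longrightarrow> e \<in> set xs \<Longrightarrow> e \<le> last xs"
proof -
  assume s: "sorted xs" and e: "e \<in> set xs"
  then have ne: "xs \<noteq> []" by auto
  then have xs: "xs = butlast xs @ [last xs]" by simp
  have "sorted (butlast xs @ [last xs])" using s xs by metis
  then have "\<forall>y\<in>set (butlast xs). y \<le> last xs" by (simp add: sorted_append)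
  moreover have "e \<in> set (butlast xs) \<or> e = last xs" using e xs
    by (metis Un_iff empty_iff empty_set list.simps(15) set_append singletonD)
  ultimately show ?thesis by auto
qed

lemma sum_list_le_bound: "\<forall>x\<in>set xs. x \<le> (b::int) \<Longrightarrow> sum_list xs \<le> int (length xs) * b"
  by (induction xs) (auto simp: algebra_simps)

lemma sum_list_count_complex:
  fixes f :: "'a \<Rightarrow> complex"
  shows "sum_list (map f xs) = (\<Sum>y\<in>set xs. of_nat (count_list xs y) * f y)"
proof (induction xs)
  case Nil then show ?case by simp
next
  case (Cons x xs)
  have "(\<Sum>y\<in>set (x#xs). of_nat (count_list (x#xs) y) * f y)
      = (\<Sum>y\<in>insert x (set xs). of_nat (count_list xs y) * f y + (if x = y then f y else 0))"
    by (rule sum.cong) (auto simp: algebra_simps)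
  also have "\<dots> = (\<Sum>y\<in>insert x (set xs). of_nat (count_list xs y) * f y) + f x"
    by (simp add: sum.distrib sum.delta)
  also have "(\<Sum>y\<in>insert x (set xs). of_nat (count_list xs y) * f y) = (\<Sum>y\<in>set xs. of_nat (count_list xs y) * f y)"
  proof (cases "x \<in> set xs")
    case True then show ?thesis by (simp add: insert_absorb)
  next
    case False then show ?thesis by (simp add: count_list_0_iff)
  qed
  finally show ?case using Cons by simp
qed

lemma sum_list_compress:
  fixes f :: "'a \<Rightarrow> complex"
  shows "sum_list (map f xs) = sum_list (map (\<lambda>(n,y). of_nat n * f y) (map (\<lambda>y. (count_list xs y, y)) (remdups xs)))"
  by (subst sum_list_count_complex) (simp add: sum.set_conv_list comp_def)

lemma vsum_concat: "vsum (concat ls) x = sum_list (map (\<lambda>l. vsum l x) ls)"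
  by (induction ls) (simp_all add: vsum_append vsum_Nil vzero_def)

fun comps :: "nat \<Rightarrow> int \<Rightarrow> int \<Rightarrow> int \<Rightarrow> int list list" where
  "comps 0 lo hi s = (if s = 0 then [[]] else [])"
| "comps (Suc r) lo hi s = (if s < int (Suc r) * lo \<or> s > int (Suc r) * hi then []
     else concat (map (\<lambda>x. map (\<lambda>ys. x # ys) (comps r lo hi (s - x))) [lo..hi]))"

lemma sum_list_ge_bound: "\<forall>x\<in>set xs. (b::int) \<le> x \<Longrightarrow> int (length xs) * b \<le> sum_list xs"
  by (induction xs) (auto simp: algebra_simps)

lemma set_comps: "set (comps r lo hi s) = {ns. length ns = r \<and> set ns \<subseteq> {lo..hi} \<and> sum_list ns = s}"
proof (induction r arbitrary: s)
  case 0 then show ?case by auto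
next
  case (Suc r)
  show ?case
  proof (cases "s < int (Suc r) * lo \<or> s > int (Suc r) * hi")
    case True
    have "\<not> (length ns = Suc r \<and> set ns \<subseteq> {lo..hi} \<and> sum_list ns = s)" for ns
    proof
      assume h: "length ns = Suc r \<and> set ns \<subseteq> {lo..hi} \<and> sum_list ns = s"
      have h1: "\<forall>x\<in>set ns. lo \<le> x" "\<forall>x\<in>set ns. x \<le> hi" using h by auto
      have "int (Suc r) * lo \<le> s" using sum_list_ge_bound[OF h1(1)] h by simp
      moreover have "s \<le> int (Suc r) * hi" using h sum_list_le_bound[OF h1(2)] by simp
      ultimately show False using True by linarith
    qed
    then show ?thesis using True by auto
  next
    case False
    have "set (comps (Suc r) lo hi s) = (\<Union>x\<in>{lo..hi}. (\<lambda>ys. x # ys) ` set (comps r lo hi (s - x)))"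
      using False by auto
    also have "\<dots> = {ns. length ns = Suc r \<and> set ns \<subseteq> {lo..hi} \<and> sum_list ns = s}"
      unfolding Suc.IH
    proof (rule Set.set_eqI, rule iffI)
      fix ns assume "ns \<in> (\<Union>x\<in>{lo..hi}. (\<lambda>ys. x # ys) ` {ns. length ns = r \<and> set ns \<subseteq> {lo..hi} \<and> sum_list ns = s - x})"
      then show "ns \<in> {ns. length ns = Suc r \<and> set ns \<subseteq> {lo..hi} \<and> sum_list ns = s}" by auto
    next
      fix ns assume h: "ns \<in> {ns. length ns = Suc r \<and> set ns \<subseteq> {lo..hi} \<and> sum_list ns = s}"
      then obtain x ys where ns: "ns = x # ys" by (cases ns) auto
      have "ys \<in> {ns. length ns = r \<and> set ns \<subseteq> {lo..hi} \<and> sum_list ns = s - x}" "x \<in> {lo..hi}"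
        using h ns by auto
      then show "ns \<in> (\<Union>x\<in>{lo..hi}. (\<lambda>ys. x # ys) ` {ns. length ns = r \<and> set ns \<subseteq> {lo..hi} \<and> sum_list ns = s - x})"
        unfolding ns by blast
    qed
    finally show ?thesis .
  qed
qed

lemma distinct_concat_map_disj:
  "distinct xs \<Longrightarrow> (\<forall>x\<in>set xs. distinct (f x)) \<Longrightarrow> (\<forall>x y. x \<noteq> y \<longrightarrow> set (f x) \<inter> set (f y) = {})
    \<Longrightarrow> distinct (concat (map f xs))"
proof (induction xs)
  case Nil then show ?case by simp
next
  case (Cons a xs)
  have "set (f a) \<inter> set (concat (map f xs)) = {}"
  proof -
    have "\<forall>y\<in>set xs. set (f a) \<inter> set (f y) = {}"
    proof
      fix y assume "y \<in> set xs"
      then have "a \<noteq> y" using Cons.prems(1) by auto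
      then show "set (f a) \<inter> set (f y) = {}" using Cons.prems(3) by blast
    qed
    then show ?thesis by auto
  qed
  then show ?case using Cons by simp
qed

lemma distinct_comps: "distinct (comps r lo hi s)"
proof (induction r arbitrary: s)
  case 0 then show ?case by simp
next
  case (Suc r)
  have "distinct (concat (map (\<lambda>x. map (\<lambda>ys. x # ys) (comps r lo hi (s - x))) [lo..hi]))"
    by (rule distinct_concat_map_disj) (auto simp: Suc.IH distinct_map)
  then show ?case by simp
qed

lemma apm_eq:
  fixes B :: nat and p :: int and r :: nat
  assumes bnd: "\<forall>(a,M,j)\<in>set l. \<forall>x\<in>#M. x \<le> B"
  and C: "map (\<lambda>ns. (count_list (map sort (comps r (p + 1 - int r - (int r - 1) * int B) (int B) (p + 1 - int r))) ns, ns))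
              (remdups (map sort (comps r (p + 1 - int r - (int r - 1) * int B) (int B) (p + 1 - int r)))) = C"
  shows "alpha_pow_mode c r p (vsum l) = vsum (concat (map (\<lambda>(n,ns). lscale (of_nat n) (foldr (lamode c) ns l)) C))"
proof (rule ext)
  fix x
  define s where "s = p + 1 - int r"
  define lo where "lo = s - (int r - 1) * int B"
  define T0 where "T0 = comps r lo (int B) s"
  define S where "S = {ns. length ns = r \<and> sum_list ns = p + 1 - int r}"
  define f where "f = (\<lambda>ns. normal_prod c ns (vsum l))"
  have bndv: "\<forall>M j. vsum l (M,j) \<noteq> 0 \<longrightarrow> (\<forall>x\<in>#M. int x \<le> int B)"
    using vsum_bnd[of l "int B"] bnd by auto
  have sub1: "{i\<in>S. f i x \<noteq> 0} \<subseteq> set T0"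
  proof
    fix i assume i: "i \<in> {i\<in>S. f i x \<noteq> 0}"
    then have len: "length i = r" and sm: "sum_list i = s" and nz: "f i x \<noteq> 0"
      by (auto simp: S_def s_def)
    have le: "\<forall>e\<in>set i. e \<le> int B"
    proof (rule ccontr)
      assume "\<not> (\<forall>e\<in>set i. e \<le> int B)"
      then obtain e where e: "e \<in> set i" "e > int B" by auto
      have "e \<le> last (sort i)" using sorted_le_last[of "sort i" e] e by simp
      moreover have "sort i \<noteq> []" using e by (metis empty_iff set_sort list.set(1))
      ultimately have "foldr (amode c) (sort i) (vsum l) = vzero"
        using foldr_amode_vanish[OF bndv, of "sort i" c] e by simp
      then show False using nz by (simp add: f_def normal_prod_def vzero_def)
    qed
    have ge: "\<forall>e\<in>set i. lo \<le> e"
    proof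
      fix e assume e: "e \<in> set i"
      have h1: "sum_list i = e + sum_list (remove1 e i)"
        using sum_list_map_remove1[OF e, of "\<lambda>x. x"] by simp
      have h2: "length (remove1 e i) = r - 1" using e len by (simp add: length_remove1)
      have h3: "r \<noteq> 0" using e len by (cases "r = 0") auto
      have h6: "\<forall>x\<in>set (remove1 e i). x \<le> int B"
        using le by (auto dest: set_remove1_subset[THEN subsetD])
      have h4: "sum_list (remove1 e i) \<le> int (r - 1) * int B"
        using sum_list_le_bound[OF h6] h2 by simp
      have h5: "int (r - 1) * int B = (int r - 1) * int B" using h3 by (simp add: of_nat_diff)
      show "lo \<le> e" using h1 h4 h5 sm unfolding lo_def by linarith
    qed
    show "i \<in> set T0" using le ge len sm by (auto simp: T0_def set_comps)
  qed
  have sub2: "set T0 \<subseteq> S" by (auto simp: T0_def S_def s_def set_comps)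
  have dT0: "distinct T0" unfolding T0_def by (rule distinct_comps)
  define g where "g = (\<lambda>ns. vsum (foldr (lamode c) ns l) x)"
  have CC: "map (\<lambda>y. (count_list (map sort T0) y, y)) (remdups (map sort T0)) = C"
    using C unfolding T0_def s_def lo_def .
  have "alpha_pow_mode c r p (vsum l) x = (\<Sum>i\<in>{i\<in>S. f i x \<noteq> 0}. f i x)"
    unfolding alpha_pow_mode_def fsum_def S_def f_def ..
  also have "\<dots> = (\<Sum>i\<in>set T0. f i x)"
  proof (rule sum.mono_neutral_left)
    show "finite (set T0)" by simp
    show "{i \<in> S. f i x \<noteq> 0} \<subseteq> set T0" by (rule sub1)
    show "\<forall>i\<in>set T0 - {i \<in> S. f i x \<noteq> 0}. f i x = 0" using sub2 by blast
  qed
  also have "\<dots> = sum_list (map (\<lambda>i. f i x) T0)"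
    using dT0 by (simp add: sum_list_distinct_conv_sum_set)
  also have "\<dots> = sum_list (map g (map sort T0))"
    unfolding f_def g_def normal_prod_def foldr_amode_vsum by (simp add: comp_def)
  also have "\<dots> = sum_list (map (\<lambda>(n,y). of_nat n * g y) (map (\<lambda>y. (count_list (map sort T0) y, y)) (remdups (map sort T0))))"
    by (rule sum_list_compress)
  also have "\<dots> = sum_list (map (\<lambda>(n,ns). of_nat n * vsum (foldr (lamode c) ns l) x) C)"
    unfolding CC g_def ..
  also have "\<dots> = vsum (concat (map (\<lambda>(n,ns). lscale (of_nat n) (foldr (lamode c) ns l)) C)) x"
    unfolding vsum_concat by (simp add: comp_def vsum_lscale case_prod_unfold)
  finally show "alpha_pow_mode c r p (vsum l) x = vsum (concat (map (\<lambda>(n,ns). lscale (of_nat n) (foldr (lamode c) ns l)) C)) x" .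
qed




definition bvl :: "int \<Rightarrow> nat multiset \<Rightarrow> (complex \<times> nat multiset \<times> int) list" where
  "bvl m P = [(1, P, m), (if even (size P) then 1 else -1, P, -m)]"
definition comb :: "int \<Rightarrow> (complex \<times> nat multiset) list \<Rightarrow> (complex \<times> nat multiset \<times> int) list" where
  "comb m xs = concat (map (\<lambda>(a,P). lscale a (bvl m P)) xs)"

lemma Fvec_vsum: "Fvec m = vsum [(1,{#},m),(-1,{#},-m)]"
  by (rule ext, clarify) (simp add: Fvec_def tensor_def vacuum_def F_lat_def vsum_def)
lemma Evec_vsum: "Evec m = vsum [(1,{#},m),(1,{#},-m)]"
  by (rule ext, clarify) (simp add: Evec_def tensor_def vacuum_def E_lat_def vsum_def)

lemma mset_lit_eq: "(add_mset a A = add_mset b B) = (\<forall>x\<in>set_mset (add_mset a A) \<union> set_mset (add_mset b B). count (add_mset a A) x = count (add_mset b B) x)"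
  by (metis UnCI count_eq_zero_iff multiset_eq_iff)

lemmas calc_simps = mset_lit_eq lamode_def lcreat_def lannih_def lzero_def lscale_def comb_def bvl_def

lemma v1: assumes c: "c \<noteq> 0" and m: "m \<noteq> 0"
  shows "Lmode c (-1) (amode c (-5) (Fvec m)) = vsum (comb m [((1 * of_int m), {#5,1#}), ((5), {#6#})])"
proof -
  have a: "(amode c (-5) (Fvec m)) = vsum [(1,{#5#},m),(-1,{#5#},-m)]"
    by (simp add: Fvec_vsum Evec_vsum amode_vsum calc_simps)
  have b: "alpha_pow_mode c 2 (-1+1) (vsum [(1,{#5#},m),(-1,{#5#},-m)]) = vsum (concat (map (\<lambda>(n,ns). lscale (of_nat n) (foldr (lamode c) ns [(1,{#5#},m),(-1,{#5#},-m)]))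
     [(2, [- 1, 0]), (2, [- 2, 1]), (2, [- 3, 2]), (2, [- 4, 3]), (2, [- 5, 4]), (2, [- 6, 5])]))"
    by (rule apm_eq[where B=5]) (simp, code_simp)
  show ?thesis
    unfolding Lmode_def a b vscale_vsum
    apply (rule vsum_eqI)
    using c m apply (simp add: calc_simps vsum_def)
    apply (simp_all add: field_simps)?
    done
qed

lemma v2: assumes c: "c \<noteq> 0" and m: "m \<noteq> 0"
  shows "Lmode c (-1) (amode c (-4) (amode c (-1) (Evec m))) = vsum (comb m [((4), {#5,1#}), ((1), {#4,2#}), ((1 * of_int m), {#4,1,1#})])"
proof -
  have a: "(amode c (-4) (amode c (-1) (Evec m))) = vsum [(1,{#4,1#},m),(1,{#4,1#},-m)]"
    by (simp add: Fvec_vsum Evec_vsum amode_vsum calc_simps)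
  have b: "alpha_pow_mode c 2 (-1+1) (vsum [(1,{#4,1#},m),(1,{#4,1#},-m)]) = vsum (concat (map (\<lambda>(n,ns). lscale (of_nat n) (foldr (lamode c) ns [(1,{#4,1#},m),(1,{#4,1#},-m)]))
     [(2, [- 1, 0]), (2, [- 2, 1]), (2, [- 3, 2]), (2, [- 4, 3]), (2, [- 5, 4])]))"
    by (rule apm_eq[where B=4]) (simp, code_simp)
  show ?thesis
    unfolding Lmode_def a b vscale_vsum
    apply (rule vsum_eqI)
    using c m apply (simp add: calc_simps vsum_def)
    apply (simp_all add: field_simps)?
    done
qed

lemma v3: assumes c: "c \<noteq> 0" and m: "m \<noteq> 0"
  shows "Lmode c (-1) (amode c (-3) (amode c (-2) (Evec m))) = vsum (comb m [((3), {#4,2#}), ((2), {#3,3#}), ((1 * of_int m), {#3,2,1#})])"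
proof -
  have a: "(amode c (-3) (amode c (-2) (Evec m))) = vsum [(1,{#3,2#},m),(1,{#3,2#},-m)]"
    by (simp add: Fvec_vsum Evec_vsum amode_vsum calc_simps)
  have b: "alpha_pow_mode c 2 (-1+1) (vsum [(1,{#3,2#},m),(1,{#3,2#},-m)]) = vsum (concat (map (\<lambda>(n,ns). lscale (of_nat n) (foldr (lamode c) ns [(1,{#3,2#},m),(1,{#3,2#},-m)]))
     [(2, [- 1, 0]), (2, [- 2, 1]), (2, [- 3, 2]), (2, [- 4, 3])]))"
    by (rule apm_eq[where B=3]) (simp, code_simp)
  show ?thesis
    unfolding Lmode_def a b vscale_vsum
    apply (rule vsum_eqI)
    using c m apply (simp add: calc_simps vsum_def)
    apply (simp_all add: field_simps)?
    done
qed

lemma v4: assumes c: "c \<noteq> 0" and m: "m \<noteq> 0"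
  shows "Lmode c (-1) (amode c (-3) (amode c (-1) (amode c (-1) (Fvec m)))) = vsum (comb m [((1 * of_int m), {#3,1,1,1#}), ((3), {#4,1,1#}), ((2), {#3,2,1#})])"
proof -
  have a: "(amode c (-3) (amode c (-1) (amode c (-1) (Fvec m)))) = vsum [(1,{#3,1,1#},m),(-1,{#3,1,1#},-m)]"
    by (simp add: Fvec_vsum Evec_vsum amode_vsum calc_simps)
  have b: "alpha_pow_mode c 2 (-1+1) (vsum [(1,{#3,1,1#},m),(-1,{#3,1,1#},-m)]) = vsum (concat (map (\<lambda>(n,ns). lscale (of_nat n) (foldr (lamode c) ns [(1,{#3,1,1#},m),(-1,{#3,1,1#},-m)]))
     [(2, [- 1, 0]), (2, [- 2, 1]), (2, [- 3, 2]), (2, [- 4, 3])]))"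
    by (rule apm_eq[where B=3]) (simp, code_simp)
  show ?thesis
    unfolding Lmode_def a b vscale_vsum
    apply (rule vsum_eqI)
    using c m apply (simp add: calc_simps vsum_def)
    apply (simp_all add: field_simps)?
    done
qed

lemma v5: assumes c: "c \<noteq> 0" and m: "m \<noteq> 0"
  shows "Lmode c (-1) (amode c (-2) (amode c (-2) (amode c (-1) (Fvec m)))) = vsum (comb m [((1 * of_int m), {#2,2,1,1#}), ((4), {#3,2,1#}), ((1), {#2,2,2#})])"
proof -
  have a: "(amode c (-2) (amode c (-2) (amode c (-1) (Fvec m)))) = vsum [(1,{#2,2,1#},m),(-1,{#2,2,1#},-m)]"
    by (simp add: Fvec_vsum Evec_vsum amode_vsum calc_simps)
  have b: "alpha_pow_mode c 2 (-1+1) (vsum [(1,{#2,2,1#},m),(-1,{#2,2,1#},-m)]) = vsum (concat (map (\<lambda>(n,ns). lscale (of_nat n) (foldr (lamode c) ns [(1,{#2,2,1#},m),(-1,{#2,2,1#},-m)]))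
     [(2, [- 1, 0]), (2, [- 2, 1]), (2, [- 3, 2])]))"
    by (rule apm_eq[where B=2]) (simp, code_simp)
  show ?thesis
    unfolding Lmode_def a b vscale_vsum
    apply (rule vsum_eqI)
    using c m apply (simp add: calc_simps vsum_def)
    apply (simp_all add: field_simps)?
    done
qed

lemma v6: assumes c: "c \<noteq> 0" and m: "m \<noteq> 0"
  shows "Lmode c (-1) (amode c (-2) (amode c (-1) (amode c (-1) (amode c (-1) (Evec m))))) = vsum (comb m [((2), {#3,1,1,1#}), ((3), {#2,2,1,1#}), ((1 * of_int m), {#2,1,1,1,1#})])"
proof -
  have a: "(amode c (-2) (amode c (-1) (amode c (-1) (amode c (-1) (Evec m))))) = vsum [(1,{#2,1,1,1#},m),(1,{#2,1,1,1#},-m)]"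
    by (simp add: Fvec_vsum Evec_vsum amode_vsum calc_simps)
  have b: "alpha_pow_mode c 2 (-1+1) (vsum [(1,{#2,1,1,1#},m),(1,{#2,1,1,1#},-m)]) = vsum (concat (map (\<lambda>(n,ns). lscale (of_nat n) (foldr (lamode c) ns [(1,{#2,1,1,1#},m),(1,{#2,1,1,1#},-m)]))
     [(2, [- 1, 0]), (2, [- 2, 1]), (2, [- 3, 2])]))"
    by (rule apm_eq[where B=2]) (simp, code_simp)
  show ?thesis
    unfolding Lmode_def a b vscale_vsum
    apply (rule vsum_eqI)
    using c m apply (simp add: calc_simps vsum_def)
    apply (simp_all add: field_simps)?
    done
qed

lemma v7: assumes c: "c \<noteq> 0" and m: "m \<noteq> 0"
  shows "Lmode c (-1) (amode c (-1) (amode c (-1) (amode c (-1) (amode c (-1) (amode c (-1) (Fvec m)))))) = vsum (comb m [((1 * of_int m), {#1,1,1,1,1,1#}), ((5), {#2,1,1,1,1#})])"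
proof -
  have a: "(amode c (-1) (amode c (-1) (amode c (-1) (amode c (-1) (amode c (-1) (Fvec m)))))) = vsum [(1,{#1,1,1,1,1#},m),(-1,{#1,1,1,1,1#},-m)]"
    by (simp add: Fvec_vsum Evec_vsum amode_vsum calc_simps)
  have b: "alpha_pow_mode c 2 (-1+1) (vsum [(1,{#1,1,1,1,1#},m),(-1,{#1,1,1,1,1#},-m)]) = vsum (concat (map (\<lambda>(n,ns). lscale (of_nat n) (foldr (lamode c) ns [(1,{#1,1,1,1,1#},m),(-1,{#1,1,1,1,1#},-m)]))
     [(2, [- 1, 0]), (2, [- 2, 1])]))"
    by (rule apm_eq[where B=1]) (simp, code_simp)
  show ?thesis
    unfolding Lmode_def a b vscale_vsum
    apply (rule vsum_eqI)
    using c m apply (simp add: calc_simps vsum_def)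
    apply (simp_all add: field_simps)?
    done
qed

lemma v8: assumes c: "c \<noteq> 0" and m: "m \<noteq> 0"
  shows "Lmode c (-3) (amode c (-3) (Fvec m)) = vsum (comb m [((1 * of_int m), {#3,3#}), ((3), {#6#}), ((1 / c), {#3,2,1#})])"
proof -
  have a: "(amode c (-3) (Fvec m)) = vsum [(1,{#3#},m),(-1,{#3#},-m)]"
    by (simp add: Fvec_vsum Evec_vsum amode_vsum calc_simps)
  have b: "alpha_pow_mode c 2 (-3+1) (vsum [(1,{#3#},m),(-1,{#3#},-m)]) = vsum (concat (map (\<lambda>(n,ns). lscale (of_nat n) (foldr (lamode c) ns [(1,{#3#},m),(-1,{#3#},-m)]))
     [(2, [- 2, - 1]), (2, [- 3, 0]), (2, [- 4, 1]), (2, [- 5, 2]), (2, [- 6, 3])]))"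
    by (rule apm_eq[where B=3]) (simp, code_simp)
  show ?thesis
    unfolding Lmode_def a b vscale_vsum
    apply (rule vsum_eqI)
    using c m apply (simp add: calc_simps vsum_def)
    apply (simp_all add: field_simps)?
    done
qed

lemma v9: assumes c: "c \<noteq> 0" and m: "m \<noteq> 0"
  shows "Lmode c (-3) (amode c (-2) (amode c (-1) (Evec m))) = vsum (comb m [((2), {#5,1#}), ((1), {#4,2#}), ((1 / c), {#2,2,1,1#}), ((1 * of_int m), {#3,2,1#})])"
proof -
  have a: "(amode c (-2) (amode c (-1) (Evec m))) = vsum [(1,{#2,1#},m),(1,{#2,1#},-m)]"
    by (simp add: Fvec_vsum Evec_vsum amode_vsum calc_simps)
  have b: "alpha_pow_mode c 2 (-3+1) (vsum [(1,{#2,1#},m),(1,{#2,1#},-m)]) = vsum (concat (map (\<lambda>(n,ns). lscale (of_nat n) (foldr (lamode c) ns [(1,{#2,1#},m),(1,{#2,1#},-m)]))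
     [(2, [- 2, - 1]), (2, [- 3, 0]), (2, [- 4, 1]), (2, [- 5, 2])]))"
    by (rule apm_eq[where B=2]) (simp, code_simp)
  show ?thesis
    unfolding Lmode_def a b vscale_vsum
    apply (rule vsum_eqI)
    using c m apply (simp add: calc_simps vsum_def)
    apply (simp_all add: field_simps)?
    done
qed

lemma v10: assumes c: "c \<noteq> 0" and m: "m \<noteq> 0"
  shows "Lmode c (-3) (amode c (-1) (amode c (-1) (amode c (-1) (Fvec m)))) = vsum (comb m [((1 * of_int m), {#3,1,1,1#}), ((3), {#4,1,1#}), ((1 / c), {#2,1,1,1,1#})])"
proof -
  have a: "(amode c (-1) (amode c (-1) (amode c (-1) (Fvec m)))) = vsum [(1,{#1,1,1#},m),(-1,{#1,1,1#},-m)]"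
    by (simp add: Fvec_vsum Evec_vsum amode_vsum calc_simps)
  have b: "alpha_pow_mode c 2 (-3+1) (vsum [(1,{#1,1,1#},m),(-1,{#1,1,1#},-m)]) = vsum (concat (map (\<lambda>(n,ns). lscale (of_nat n) (foldr (lamode c) ns [(1,{#1,1,1#},m),(-1,{#1,1,1#},-m)]))
     [(2, [- 2, - 1]), (2, [- 3, 0]), (2, [- 4, 1])]))"
    by (rule apm_eq[where B=1]) (simp, code_simp)
  show ?thesis
    unfolding Lmode_def a b vscale_vsum
    apply (rule vsum_eqI)
    using c m apply (simp add: calc_simps vsum_def)
    apply (simp_all add: field_simps)?
    done
qed

lemma v11: assumes c: "c \<noteq> 0" and m: "m \<noteq> 0"
  shows "alpha_pow_mode c 4 (-3) (Evec m) = vsum (comb m [((12 * c * c * of_int m * of_int m), {#5,1#}), ((12 * c * c * of_int m * of_int m), {#4,2#}), ((6 * c * c * of_int m * of_int m), {#3,3#}), ((4), {#3,1,1,1#}), ((6), {#2,2,1,1#}), ((4 * c * c * c * of_int m * of_int m * of_int m), {#6#}), ((12 * c * of_int m), {#4,1,1#}), ((24 * c * of_int m), {#3,2,1#}), ((4 * c * of_int m), {#2,2,2#})])"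
proof -
  have a: "(Evec m) = vsum [(1,{#},m),(1,{#},-m)]"
    by (simp add: Fvec_vsum Evec_vsum amode_vsum calc_simps)
  have b: "alpha_pow_mode c 4 (-3) (vsum [(1,{#},m),(1,{#},-m)]) = vsum (concat (map (\<lambda>(n,ns). lscale (of_nat n) (foldr (lamode c) ns [(1,{#},m),(1,{#},-m)]))
     [(6, [- 2, - 2, - 1, - 1]), (4, [- 3, - 1, - 1, - 1]), (4, [- 2, - 2, - 2, 0]), (24, [- 3, - 2, - 1, 0]), (12, [- 4, - 1, - 1, 0]), (6, [- 3, - 3, 0, 0]), (12, [- 4, - 2, 0, 0]), (12, [- 5, - 1, 0, 0]), (4, [- 6, 0, 0, 0])]))"
    by (rule apm_eq[where B=0]) (simp, code_simp)
  show ?thesis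
    unfolding a b 
    apply (rule vsum_eqI)
    using c m apply (simp add: calc_simps vsum_def)
    apply (simp_all add: field_simps)?
    done
qed




lemma indep11:
  fixes c M x1 x2 x3 x4 x5 x6 x7 x8 x9 x10 x11 :: complex
  assumes c: "c \<noteq> 0" and M: "M \<noteq> 0" and u: "c*M^2 \<noteq> 2"
  and col1: "M*x1 + 4*x2 + 2*x9 + 12*c*c*M*M*x11 = 0"
  and col2: "x2 + 3*x3 + x9 + 12*c*c*M*M*x11 = 0"
  and col3: "2*x3 + M*x8 + 6*c*c*M*M*x11 = 0"
  and col4: "M*x4 + 2*x6 + M*x10 + 4*x11 = 0"
  and col5: "M*x5 + 3*x6 + x9/c + 6*x11 = 0"
  and col6: "M*x7 = 0"
  and col7: "5*x1 + 3*x8 + 4*c*c*c*M*M*M*x11 = 0"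
  and col8: "M*x2 + 3*x4 + 3*x10 + 12*c*M*x11 = 0"
  and col9: "M*x3 + 2*x4 + 4*x5 + x8/c + M*x9 + 24*c*M*x11 = 0"
  and col10: "x5 + 4*c*M*x11 = 0"
  and col11: "M*x6 + 5*x7 + x10/c = 0"
  shows "x1 = 0 \<and> x2 = 0 \<and> x3 = 0 \<and> x4 = 0 \<and> x5 = 0 \<and> x6 = 0 \<and> x7 = 0 \<and> x8 = 0 \<and> x9 = 0 \<and> x10 = 0 \<and> x11 = 0"
proof -
  have c5: "c*M*x5 + 3*c*x6 + x9 + 6*c*x11 = 0" using col5 c by (simp add: field_simps)
  have c9: "c*M*x3 + 2*c*x4 + 4*c*x5 + x8 + c*M*x9 + 24*c*c*M*x11 = 0" using col9 c by (simp add: field_simps)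
  have c11: "c*M*x6 + 5*c*x7 + x10 = 0" using col11 c by (simp add: field_simps)
  have p7: "x7 = 0" using col6 M by simp
  have p5: "x5 = -4*c*M*x11" using col10 by Groebner_Basis.algebra
  have p10: "x10 = -c*M*x6" using c11 p7 by Groebner_Basis.algebra
  have p4: "M*x4 = -4*x11 + (c*M^2 - 2)*x6" using col4 p10 by Groebner_Basis.algebra
  have p9: "x9 = (-6*c + 4*c^2*M^2)*x11 - 3*c*x6" using c5 p5 by Groebner_Basis.algebra
  have p2: "M^2*x2 = (12 - 12*c*M^2)*x11 + 6*x6" using col8 p4 p10 by Groebner_Basis.algebra
  have p3: "3*M^2*x3 = (-12 + 18*c*M^2 - 16*c^2*M^4)*x11 + (-6 + 3*c*M^2)*x6" using col2 p2 p9 by Groebner_Basis.algebra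
  have p8: "3*M^3*x8 = (24 - 36*c*M^2 + 14*c^2*M^4)*x11 + (12 - 6*c*M^2)*x6" using col3 p3 by Groebner_Basis.algebra
  have p1: "M^3*x1 = (-48 + 60*c*M^2 - 20*c^2*M^4)*x11 + (-24 + 6*c*M^2)*x6" using col1 p2 p9 by Groebner_Basis.algebra
  have e9: "(24 - 72*c*M^2 + 38*c^2*M^4 - 4*c^3*M^6)*x11 + (12 - 24*c*M^2)*x6 = 0"
    using c9 p3 p4 p5 p8 p9 by Groebner_Basis.algebra
  have e7: "(-216 + 264*c*M^2 - 86*c^2*M^4 + 4*c^3*M^6)*x11 + (-108 + 24*c*M^2)*x6 = 0"
    using col7 p1 p8 by Groebner_Basis.algebra
  have "768*(c*M^2)^2*(c*M^2 - 2)*x11 = 0" using e9 e7 by Groebner_Basis.algebra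
  moreover have "768*(c*M^2)^2*(c*M^2 - 2) \<noteq> 0" using c M u by simp
  ultimately have z11: "x11 = 0" by simp
  have "(12 - 24*c*M^2)*x6 = 0" "(-108 + 24*c*M^2)*x6 = 0" using e9 e7 z11 by simp_all
  then have "96*x6 = 0" by Groebner_Basis.algebra
  then have z6: "x6 = 0" by simp
  have "M^3*x1 = 0" "M^2*x2 = 0" "3*M^2*x3 = 0" "M*x4 = 0" "3*M^3*x8 = 0"
    using p1 p2 p3 p4 p8 z6 z11 by simp_all
  then show ?thesis using M p5 p7 p9 p10 z6 z11 by simp
qed




lemma square_surj:
  fixes A :: "nat \<Rightarrow> nat \<Rightarrow> 'a::field"
  assumes inj: "\<forall>x. (\<forall>j<n. (\<Sum>i<n. x i * A i j) = 0) \<longrightarrow> (\<forall>i<n. x i = 0)"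
  shows "\<exists>x. \<forall>j<n. (\<Sum>i<n. x i * A i j) = w j"
proof -
  define Mt where "Mt = mat n n (\<lambda>(j,i). A i j)"
  have Mc: "Mt \<in> carrier_mat n n" by (simp add: Mt_def)
  have mv: "(Mt *\<^sub>v v) $ j = (\<Sum>i<n. v $ i * A i j)" if "j < n" "v \<in> carrier_vec n" for v j
    using that by (simp add: Mt_def scalar_prod_def lessThan_atLeast0 mult.commute)
  have "det Mt \<noteq> 0"
  proof
    assume "det Mt = 0"
    then obtain v where v: "v \<in> carrier_vec n" "v \<noteq> 0\<^sub>v n" "Mt *\<^sub>v v = 0\<^sub>v n"
      using det_0_iff_vec_prod_zero_field[OF Mc] by blast
    have "\<forall>j<n. (\<Sum>i<n. (\<lambda>i. v $ i) i * A i j) = 0"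
    proof (intro allI impI)
      fix j assume j: "j < n"
      have "(Mt *\<^sub>v v) $ j = 0" using v(3) j by simp
      then show "(\<Sum>i<n. (\<lambda>i. v $ i) i * A i j) = 0" using mv[OF j v(1)] by simp
    qed
    then have "\<forall>i<n. v $ i = 0" using inj by blast
    then have "v = 0\<^sub>v n" using v(1) by (intro eq_vecI) auto
    then show False using v(2) by simp
  qed
  then have "Mt \<in> Units (ring_mat TYPE('a) n undefined)" by (rule det_non_zero_imp_unit[OF Mc])
  then obtain B where B: "B \<in> carrier_mat n n" "Mt * B = 1\<^sub>m n"
    unfolding Units_def by (auto simp: ring_mat_def)
  define v where "v = B *\<^sub>v vec n w"
  have vc: "v \<in> carrier_vec n" using B(1) by (simp add: v_def)
  have "Mt *\<^sub>v v = vec n w"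
    unfolding v_def using B Mc by (simp add: assoc_mult_mat_vec[symmetric])
  then have "\<forall>j<n. (\<Sum>i<n. v $ i * A i j) = w j"
    using mv[OF _ vc] by (metis index_vec)
  then show ?thesis by blast
qed




lemma Fock_add: "u \<in> Fock \<Longrightarrow> v \<in> Fock \<Longrightarrow> (\<lambda>M. u M + v M) \<in> Fock"
proof -
  assume u: "u \<in> Fock" and v: "v \<in> Fock"
  have "{M. u M + v M \<noteq> 0} \<subseteq> {M. u M \<noteq> 0} \<union> {M. v M \<noteq> 0}" by auto
  moreover have "finite ({M. u M \<noteq> 0} \<union> {M. v M \<noteq> 0})" using u v by (simp add: Fock_def)
  ultimately have "finite {M. u M + v M \<noteq> 0}" by (rule finite_subset)
  moreover have "0 \<notin># M" if "u M + v M \<noteq> 0" for M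
  proof -
    have "u M \<noteq> 0 \<or> v M \<noteq> 0" using that by auto
    then show ?thesis using u v unfolding Fock_def by blast
  qed
  ultimately show ?thesis unfolding Fock_def by blast
qed

lemma Fock_scale: "u \<in> Fock \<Longrightarrow> (\<lambda>M. a * u M) \<in> Fock"
proof -
  assume u: "u \<in> Fock"
  have "{M. a * u M \<noteq> 0} \<subseteq> {M. u M \<noteq> 0}" by auto
  moreover have "finite {M. u M \<noteq> 0}" using u by (simp add: Fock_def)
  ultimately have "finite {M. a * u M \<noteq> 0}" by (rule finite_subset)
  moreover have "0 \<notin># M" if "a * u M \<noteq> 0" for M
  proof -
    have "u M \<noteq> 0" using that by auto
    then show ?thesis using u unfolding Fock_def by blast
  qed
  ultimately show ?thesis unfolding Fock_def by blast
qed

lemma M1plus_iff: "u \<in> M1plus \<longleftrightarrow> u \<in> Fock \<and> (\<forall>M. (-1) ^ size M * u M = u M)"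
  unfolding M1plus_def theta_M1_def fun_eq_iff by blast
lemma M1minus_iff: "u \<in> M1minus \<longleftrightarrow> u \<in> Fock \<and> (\<forall>M. (-1) ^ size M * u M = - u M)"
  unfolding M1minus_def theta_M1_def fun_eq_iff by blast

lemma M1plus_add: assumes "u \<in> M1plus" "v \<in> M1plus" shows "(\<lambda>M. u M + v M) \<in> M1plus"
proof -
  have h: "(-1) ^ size M * u M = u M" "(-1) ^ size M * v M = v M" for M
    using assms unfolding M1plus_iff by blast+
  have "(-1) ^ size M * (u M + v M) = u M + v M" for M
    unfolding distrib_left h by (rule refl)
  moreover have "(\<lambda>M. u M + v M) \<in> Fock" using assms Fock_add unfolding M1plus_iff by blast
  ultimately show ?thesis unfolding M1plus_iff by blast
qed
lemma M1minus_add: "u \<in> M1minus \<Longrightarrow> v \<in> M1minus \<Longrightarrow> (\<lambda>M. u M + v M) \<in> M1minus"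
  unfolding M1minus_iff using Fock_add by (simp add: distrib_left)
lemma M1plus_scale: "u \<in> M1plus \<Longrightarrow> (\<lambda>M. a * u M) \<in> M1plus"
  unfolding M1plus_iff using Fock_scale by (metis mult.left_commute)
lemma M1minus_scale: "u \<in> M1minus \<Longrightarrow> (\<lambda>M. a * u M) \<in> M1minus"
  unfolding M1minus_iff using Fock_scale by (metis mult.left_commute mult_minus_right)



lemma tensor_add: "vadd (tensor u g) (tensor v g) = tensor (\<lambda>M. u M + v M) g"
  by (rule ext) (auto simp: vadd_def tensor_def algebra_simps)
lemma tensor_scale: "vscale a (tensor u g) = tensor (\<lambda>M. a * u M) g"
  by (rule ext) (auto simp: vscale_def tensor_def algebra_simps)

lemma VLplus_add: "v \<in> VLplus m \<Longrightarrow> v' \<in> VLplus m \<Longrightarrow> vadd v v' \<in> VLplus m"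
proof -
  assume "v \<in> VLplus m" "v' \<in> VLplus m"
  then obtain u1 u1' u2 u2' where h: "v = vadd (tensor u1 (E_lat m)) (tensor u1' (F_lat m))" "u1 \<in> M1plus" "u1' \<in> M1minus"
    "v' = vadd (tensor u2 (E_lat m)) (tensor u2' (F_lat m))" "u2 \<in> M1plus" "u2' \<in> M1minus"
    by (auto simp: VLplus_def)
  have "vadd v v' = vadd (tensor (\<lambda>M. u1 M + u2 M) (E_lat m)) (tensor (\<lambda>M. u1' M + u2' M) (F_lat m))"
    unfolding h(1,4) tensor_add[symmetric] by (rule ext) (simp add: vadd_def algebra_simps)
  then show ?thesis unfolding VLplus_def using h(2,3,5,6) M1plus_add M1minus_add by blast
qed

lemma VLplus_scale: "v \<in> VLplus m \<Longrightarrow> vscale a v \<in> VLplus m"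
proof -
  assume "v \<in> VLplus m"
  then obtain u1 u1' where h: "v = vadd (tensor u1 (E_lat m)) (tensor u1' (F_lat m))" "u1 \<in> M1plus" "u1' \<in> M1minus"
    by (auto simp: VLplus_def)
  have "vscale a v = vadd (tensor (\<lambda>M. a * u1 M) (E_lat m)) (tensor (\<lambda>M. a * u1' M) (F_lat m))"
    unfolding h(1) tensor_scale[symmetric] by (rule ext) (simp add: vadd_def vscale_def algebra_simps)
  then show ?thesis unfolding VLplus_def using h(2,3) M1plus_scale M1minus_scale by blast
qed

lemma W_add: assumes "v \<in> VLplus_wt k m n" "v' \<in> VLplus_wt k m n" shows "vadd v v' \<in> VLplus_wt k m n"
proof -
  have "vadd v v' \<in> VLplus m" using assms VLplus_add unfolding VLplus_wt_def by blast
  moreover have "wt k x = n" if "vadd v v' x \<noteq> 0" for x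
  proof -
    have "v x \<noteq> 0 \<or> v' x \<noteq> 0" using that by (auto simp: vadd_def)
    then show ?thesis using assms unfolding VLplus_wt_def by blast
  qed
  ultimately show ?thesis unfolding VLplus_wt_def by blast
qed

lemma W_scale: "v \<in> VLplus_wt k m n \<Longrightarrow> vscale a v \<in> VLplus_wt k m n"
  unfolding VLplus_wt_def using VLplus_scale by (auto simp: vscale_def)

lemma zero_M1plus: "(\<lambda>M. 0) \<in> M1plus" by (simp add: M1plus_def Fock_def theta_M1_def)
lemma zero_M1minus: "(\<lambda>M. 0) \<in> M1minus" by (simp add: M1minus_def Fock_def theta_M1_def)

lemma W_zero: "vzero \<in> VLplus_wt k m n"
proof -
  have "vzero = vadd (tensor (\<lambda>M. 0) (E_lat m)) (tensor (\<lambda>M. 0) (F_lat m))"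
    by (rule ext) (simp add: vzero_def vadd_def tensor_def split: prod.splits)
  then have "vzero \<in> VLplus m" using zero_M1plus zero_M1minus by (auto simp: VLplus_def)
  then show ?thesis by (simp add: VLplus_wt_def vzero_def)
qed




lemma bvl_in_W:
  assumes P: "sum_mset P = 6" "0 \<notin># P"
  shows "vsum (bvl m P) \<in> VLplus_wt k m (- k * m\<^sup>2 + 6)"
proof -
  define d where "d = (\<lambda>M. if M = P then (1::complex) else 0)"
  have fin: "{M. d M \<noteq> 0} = {P}" by (auto simp: d_def)
  have dF: "d \<in> Fock" using P by (auto simp: Fock_def fin d_def)
  have "vsum (bvl m P) \<in> VLplus m"
  proof (cases "even (size P)")
    case True
    have "d \<in> M1plus" using dF True by (auto simp: M1plus_def theta_M1_def d_def fun_eq_iff)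
    moreover have "vsum (bvl m P) = vadd (tensor d (E_lat m)) (tensor (\<lambda>M. 0) (F_lat m))"
      using True by (intro ext) (auto simp: vsum_def bvl_def vadd_def tensor_def d_def E_lat_def split: prod.splits)
    ultimately show ?thesis using zero_M1minus by (auto simp: VLplus_def)
  next
    case False
    have "d \<in> M1minus" using dF False by (auto simp: M1minus_def theta_M1_def d_def fun_eq_iff)
    moreover have "vsum (bvl m P) = vadd (tensor (\<lambda>M. 0) (E_lat m)) (tensor d (F_lat m))"
      using False by (intro ext) (auto simp: vsum_def bvl_def vadd_def tensor_def d_def F_lat_def split: prod.splits)
    ultimately show ?thesis using zero_M1plus by (auto simp: VLplus_def)
  qed
  moreover have "\<forall>x. vsum (bvl m P) x \<noteq> 0 \<longrightarrow> wt k x = - k * m\<^sup>2 + 6"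
  proof (intro allI impI)
    fix x assume "vsum (bvl m P) x \<noteq> 0"
    then have "x \<in> set (map snd (bvl m P))" using vsum_notin by blast
    then have "x = (P, m) \<or> x = (P, -m)" by (auto simp: bvl_def)
    moreover have "int (sum_mset P) = 6" using P by simp
    ultimately show "wt k x = - k * m\<^sup>2 + 6" unfolding wt_def by (auto simp del: of_nat_sum_mset)
  qed
  ultimately show ?thesis by (simp add: VLplus_wt_def)
qed

lemma comb_in_W:
  "\<forall>(a,P)\<in>set xs. sum_mset P = 6 \<and> 0 \<notin># P \<Longrightarrow> vsum (comb m xs) \<in> VLplus_wt k m (- k * m\<^sup>2 + 6)"
proof (induction xs)
  case Nil then show ?case by (simp add: comb_def vsum_Nil W_zero)
next
  case (Cons t xs)
  obtain a P where t: "t = (a, P)" by (cases t) auto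
  have "vsum (comb m (t # xs)) = vadd (vscale a (vsum (bvl m P))) (vsum (comb m xs))"
    by (rule ext) (simp add: t comb_def vsum_append vsum_lscale vadd_def vscale_def)
  then show ?case using Cons t bvl_in_W W_add W_scale by auto
qed

lemma lincomb_in_W:
  assumes "set bs \<subseteq> VLplus_wt k m n"
  shows "lincomb a bs \<in> VLplus_wt k m n"
proof -
  have "j \<le> length bs \<Longrightarrow> (\<lambda>x. \<Sum>i<j. a i * (bs ! i) x) \<in> VLplus_wt k m n" for j
  proof (induction j)
    case 0 then show ?case using W_zero[of k m n] by (simp add: vzero_def)
  next
    case (Suc j)
    have "(\<lambda>x. \<Sum>i<Suc j. a i * (bs ! i) x) = vadd (\<lambda>x. \<Sum>i<j. a i * (bs ! i) x) (vscale (a j) (bs ! j))"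
      by (rule ext) (simp add: vadd_def vscale_def)
    moreover have "bs ! j \<in> VLplus_wt k m n" using assms Suc.prems by auto
    ultimately show ?case using Suc W_add W_scale by simp
  qed
  then show ?thesis by (simp add: lincomb_def)
qed




lemma W_determined:
  assumes m: "m \<noteq> 0" and d: "d \<in> VLplus_wt k m (- k * m\<^sup>2 + 6)"
  and z: "\<forall>P. sum_mset P = 6 \<and> 0 \<notin># P \<longrightarrow> d (P, m) = 0"
  shows "d = vzero"
proof -
  obtain u u' where h: "d = vadd (tensor u (E_lat m)) (tensor u' (F_lat m))" "u \<in> M1plus" "u' \<in> M1minus"
    using d by (auto simp: VLplus_wt_def VLplus_def)
  have wtc: "\<forall>x. d x \<noteq> 0 \<longrightarrow> wt k x = - k * m\<^sup>2 + 6" using d by (simp add: VLplus_wt_def)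
  have Em: "E_lat m m = 1" "F_lat m m = 1" using m by (auto simp: E_lat_def F_lat_def)
  have dm: "d (M, m) = u M + u' M" for M by (simp add: h vadd_def tensor_def Em)
  have up: "(-1) ^ size M * u M = u M" for M using h(2) by (auto simp: M1plus_def theta_M1_def fun_eq_iff)
  have um: "(-1) ^ size M * u' M = - u' M" for M using h(3) by (auto simp: M1minus_def theta_M1_def fun_eq_iff)
  have key: "sum_mset M = 6 \<and> 0 \<notin># M" if "d (M, m) \<noteq> 0" "u M \<noteq> 0 \<or> u' M \<noteq> 0" for M
  proof
    have "wt k (M, m) = - k * m\<^sup>2 + 6" using wtc that(1) by blast
    then have "int (sum_mset M) = 6" by (simp add: wt_def del: of_nat_sum_mset)
    then show "sum_mset M = 6" by (simp del: of_nat_sum_mset)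
    show "0 \<notin># M" using that(2) h(2,3) by (auto simp: M1plus_def M1minus_def Fock_def)
  qed
  have u0: "u M = 0 \<and> u' M = 0" for M
  proof (cases "even (size M)")
    case True
    then have "u' M = 0" using um[of M] by simp
    moreover have "u M = 0"
    proof (rule ccontr)
      assume "u M \<noteq> 0"
      then have "d (M, m) \<noteq> 0" using dm \<open>u' M = 0\<close> by simp
      then show False using key[of M] \<open>u M \<noteq> 0\<close> z by blast
    qed
    ultimately show ?thesis by simp
  next
    case False
    then have "u M = 0" using up[of M] by simp
    moreover have "u' M = 0"
    proof (rule ccontr)
      assume "u' M \<noteq> 0"
      then have "d (M, m) \<noteq> 0" using dm \<open>u M = 0\<close> by simp
      then show False using key[of M] \<open>u' M \<noteq> 0\<close> z by blast
    qed
    ultimately show ?thesis by simp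
  qed
  show ?thesis by (rule ext) (simp add: h vadd_def tensor_def vzero_def u0 split: prod.splits)
qed




lemma comps6: "concat (map (\<lambda>r. comps r 1 6 6) [0..<7]) = [[6], [1, 5], [2, 4], [3, 3], [4, 2], [5, 1], [1, 1, 4], [1, 2, 3], [1, 3, 2], [1, 4, 1], [2, 1, 3], [2, 2, 2], [2, 3, 1], [3, 1, 2], [3, 2, 1], [4, 1, 1], [1, 1, 1, 3], [1, 1, 2, 2], [1, 1, 3, 1], [1, 2, 1, 2], [1, 2, 2, 1], [1, 3, 1, 1], [2, 1, 1, 2], [2, 1, 2, 1], [2, 2, 1, 1], [3, 1, 1, 1], [1, 1, 1, 1, 2], [1, 1, 1, 2, 1], [1, 1, 2, 1, 1], [1, 2, 1, 1, 1], [2, 1, 1, 1, 1], [1, 1, 1, 1, 1, 1]]"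
  by code_simp

definition plist :: "nat multiset list" where
  "plist = [{#5,1#}, {#4,2#}, {#3,3#}, {#3,1,1,1#}, {#2,2,1,1#}, {#1,1,1,1,1,1#}, {#6#}, {#4,1,1#}, {#3,2,1#}, {#2,2,2#}, {#2,1,1,1,1#}]"

lemma parts6:
  assumes P: "sum_mset P = 6" "0 \<notin># P"
  shows "P \<in> set plist"
proof -
  define xs where "xs = sorted_list_of_multiset P"
  have Pxs: "P = mset xs" by (simp add: xs_def)
  have sx: "sum_list xs = 6" using P(1) Pxs by (metis sum_mset_sum_list)
  have ge1: "\<forall>x\<in>set xs. 1 \<le> x"
  proof
    fix x assume "x \<in> set xs"
    then have "x \<in># P" using Pxs by simp
    then have "x \<noteq> 0" using P(2) by (metis)
    then show "1 \<le> x" by simp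
  qed
  have le6: "\<forall>x\<in>set xs. x \<le> 6" using sx member_le_sum_list[of _ xs] by auto
  have sxi: "sum_list (map int xs) = 6" using sx by (simp add: sum_list_of_nat)
  have "int (length (map int xs)) * 1 \<le> sum_list (map int xs)"
    by (rule sum_list_ge_bound) (use ge1 in auto)
  then have len: "length xs < 7" using sxi by simp
  have "map int xs \<in> set (comps (length xs) 1 6 6)"
    using ge1 le6 sxi by (auto simp: set_comps)
  then have "map int xs \<in> set (concat (map (\<lambda>r. comps r 1 6 6) [0..<7]))"
    using len by auto
  then have mem: "map int xs \<in> set [[6], [1, 5], [2, 4], [3, 3], [4, 2], [5, 1], [1, 1, 4], [1, 2, 3], [1, 3, 2], [1, 4, 1], [2, 1, 3], [2, 2, 2], [2, 3, 1], [3, 1, 2], [3, 2, 1], [4, 1, 1], [1, 1, 1, 3], [1, 1, 2, 2], [1, 1, 3, 1], [1, 2, 1, 2], [1, 2, 2, 1], [1, 3, 1, 1], [2, 1, 1, 2], [2, 1, 2, 1], [2, 2, 1, 1], [3, 1, 1, 1], [1, 1, 1, 1, 2], [1, 1, 1, 2, 1], [1, 1, 2, 1, 1], [1, 2, 1, 1, 1], [2, 1, 1, 1, 1], [1, 1, 1, 1, 1, 1]]"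
    unfolding comps6 .
  have all: "\<forall>ys\<in>set [[6], [1, 5], [2, 4], [3, 3], [4, 2], [5, 1], [1, 1, 4], [1, 2, 3], [1, 3, 2], [1, 4, 1], [2, 1, 3], [2, 2, 2], [2, 3, 1], [3, 1, 2], [3, 2, 1], [4, 1, 1], [1, 1, 1, 3], [1, 1, 2, 2], [1, 1, 3, 1], [1, 2, 1, 2], [1, 2, 2, 1], [1, 3, 1, 1], [2, 1, 1, 2], [2, 1, 2, 1], [2, 2, 1, 1], [3, 1, 1, 1], [1, 1, 1, 1, 2], [1, 1, 1, 2, 1], [1, 1, 2, 1, 1], [1, 2, 1, 1, 1], [2, 1, 1, 1, 1], [1, 1, 1, 1, 1, 1::int]]. mset (map nat ys) \<in> set plist"
    by (simp add: plist_def mset_lit_eq)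
  have "P = mset (map nat (map int xs))" using Pxs by (simp add: comp_def)
  then show ?thesis using all mem by metis
qed



definition BS :: "complex \<Rightarrow> int \<Rightarrow> (nat multiset \<times> int \<Rightarrow> complex) list" where
  "BS c m = [vsum (comb m [((1 * of_int m), {#5,1#}), ((5), {#6#})]),
   vsum (comb m [((4), {#5,1#}), ((1), {#4,2#}), ((1 * of_int m), {#4,1,1#})]),
   vsum (comb m [((3), {#4,2#}), ((2), {#3,3#}), ((1 * of_int m), {#3,2,1#})]),
   vsum (comb m [((1 * of_int m), {#3,1,1,1#}), ((3), {#4,1,1#}), ((2), {#3,2,1#})]),
   vsum (comb m [((1 * of_int m), {#2,2,1,1#}), ((4), {#3,2,1#}), ((1), {#2,2,2#})]),
   vsum (comb m [((2), {#3,1,1,1#}), ((3), {#2,2,1,1#}), ((1 * of_int m), {#2,1,1,1,1#})]),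
   vsum (comb m [((1 * of_int m), {#1,1,1,1,1,1#}), ((5), {#2,1,1,1,1#})]),
   vsum (comb m [((1 * of_int m), {#3,3#}), ((3), {#6#}), ((1 / c), {#3,2,1#})]),
   vsum (comb m [((2), {#5,1#}), ((1), {#4,2#}), ((1 / c), {#2,2,1,1#}), ((1 * of_int m), {#3,2,1#})]),
   vsum (comb m [((1 * of_int m), {#3,1,1,1#}), ((3), {#4,1,1#}), ((1 / c), {#2,1,1,1,1#})]),
   vsum (comb m [((12 * c * c * of_int m * of_int m), {#5,1#}), ((12 * c * c * of_int m * of_int m), {#4,2#}), ((6 * c * c * of_int m * of_int m), {#3,3#}), ((4), {#3,1,1,1#}), ((6), {#2,2,1,1#}), ((4 * c * c * c * of_int m * of_int m * of_int m), {#6#}), ((12 * c * of_int m), {#4,1,1#}), ((24 * c * of_int m), {#3,2,1#}), ((4 * c * of_int m), {#2,2,2#})])]"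

lemma lincomb11: "lincomb x [b0,b1,b2,b3,b4,b5,b6,b7,b8,b9,b10] p =
  x 0 * b0 p + x 1 * b1 p + x 2 * b2 p + x 3 * b3 p + x 4 * b4 p + x 5 * b5 p + x 6 * b6 p + x 7 * b7 p + x 8 * b8 p + x 9 * b9 p + x 10 * b10 p"
  by (simp add: lincomb_def numeral_eq_Suc lessThan_Suc algebra_simps)

lemma core_indep:
  fixes m :: int and c :: complex
  assumes c: "c \<noteq> 0" and m: "m \<noteq> 0" and u: "c * (of_int m)^2 \<noteq> 2"
  and h: "\<forall>j<11. lincomb x (BS c m) (plist ! j, m) = 0"
  shows "\<forall>i<11. x i = 0"
proof -
  have M: "(of_int m :: complex) \<noteq> 0" using m by simp
  have mm: "- m \<noteq> m" using m by simp
  have e0: "lincomb x (BS c m) ({#5,1#}, m) = of_int m*x 0 + 4*x 1 + 2*x 8 + 12*c*c*of_int m*of_int m*x 10"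
    unfolding BS_def lincomb11 using mm by (simp add: calc_simps vsum_def; simp add: algebra_simps)
  have h0: "of_int m*x 0 + 4*x 1 + 2*x 8 + 12*c*c*of_int m*of_int m*x 10 = 0" using h[rule_format, of 0] e0 by (simp add: plist_def)
  have e1: "lincomb x (BS c m) ({#4,2#}, m) = x 1 + 3*x 2 + x 8 + 12*c*c*of_int m*of_int m*x 10"
    unfolding BS_def lincomb11 using mm by (simp add: calc_simps vsum_def; simp add: algebra_simps)
  have h1: "x 1 + 3*x 2 + x 8 + 12*c*c*of_int m*of_int m*x 10 = 0" using h[rule_format, of 1] e1 by (simp add: plist_def)
  have e2: "lincomb x (BS c m) ({#3,3#}, m) = 2*x 2 + of_int m*x 7 + 6*c*c*of_int m*of_int m*x 10"
    unfolding BS_def lincomb11 using mm by (simp add: calc_simps vsum_def; simp add: algebra_simps)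
  have h2: "2*x 2 + of_int m*x 7 + 6*c*c*of_int m*of_int m*x 10 = 0" using h[rule_format, of 2] e2 by (simp add: plist_def)
  have e3: "lincomb x (BS c m) ({#3,1,1,1#}, m) = of_int m*x 3 + 2*x 5 + of_int m*x 9 + 4*x 10"
    unfolding BS_def lincomb11 using mm by (simp add: calc_simps vsum_def; simp add: algebra_simps)
  have h3: "of_int m*x 3 + 2*x 5 + of_int m*x 9 + 4*x 10 = 0" using h[rule_format, of 3] e3 by (simp add: plist_def)
  have e4: "lincomb x (BS c m) ({#2,2,1,1#}, m) = of_int m*x 4 + 3*x 5 + x 8 / c + 6*x 10"
    unfolding BS_def lincomb11 using mm by (simp add: calc_simps vsum_def; simp add: algebra_simps)
  have h4: "of_int m*x 4 + 3*x 5 + x 8 / c + 6*x 10 = 0" using h[rule_format, of 4] e4 by (simp add: plist_def)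
  have e5: "lincomb x (BS c m) ({#1,1,1,1,1,1#}, m) = of_int m*x 6"
    unfolding BS_def lincomb11 using mm by (simp add: calc_simps vsum_def; simp add: algebra_simps)
  have h5: "of_int m*x 6 = 0" using h[rule_format, of 5] e5 by (simp add: plist_def)
  have e6: "lincomb x (BS c m) ({#6#}, m) = 5*x 0 + 3*x 7 + 4*c*c*c*of_int m*of_int m*of_int m*x 10"
    unfolding BS_def lincomb11 using mm by (simp add: calc_simps vsum_def; simp add: algebra_simps)
  have h6: "5*x 0 + 3*x 7 + 4*c*c*c*of_int m*of_int m*of_int m*x 10 = 0" using h[rule_format, of 6] e6 by (simp add: plist_def)
  have e7: "lincomb x (BS c m) ({#4,1,1#}, m) = of_int m*x 1 + 3*x 3 + 3*x 9 + 12*c*of_int m*x 10"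
    unfolding BS_def lincomb11 using mm by (simp add: calc_simps vsum_def; simp add: algebra_simps)
  have h7: "of_int m*x 1 + 3*x 3 + 3*x 9 + 12*c*of_int m*x 10 = 0" using h[rule_format, of 7] e7 by (simp add: plist_def)
  have e8: "lincomb x (BS c m) ({#3,2,1#}, m) = of_int m*x 2 + 2*x 3 + 4*x 4 + x 7 / c + of_int m*x 8 + 24*c*of_int m*x 10"
    unfolding BS_def lincomb11 using mm by (simp add: calc_simps vsum_def; simp add: algebra_simps)
  have h8: "of_int m*x 2 + 2*x 3 + 4*x 4 + x 7 / c + of_int m*x 8 + 24*c*of_int m*x 10 = 0" using h[rule_format, of 8] e8 by (simp add: plist_def)
  have e9: "lincomb x (BS c m) ({#2,2,2#}, m) = x 4 + 4*c*of_int m*x 10"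
    unfolding BS_def lincomb11 using mm by (simp add: calc_simps vsum_def; simp add: algebra_simps)
  have h9: "x 4 + 4*c*of_int m*x 10 = 0" using h[rule_format, of 9] e9 by (simp add: plist_def)
  have e10: "lincomb x (BS c m) ({#2,1,1,1,1#}, m) = of_int m*x 5 + 5*x 6 + x 9 / c"
    unfolding BS_def lincomb11 using mm by (simp add: calc_simps vsum_def; simp add: algebra_simps)
  have h10: "of_int m*x 5 + 5*x 6 + x 9 / c = 0" using h[rule_format, of 10] e10 by (simp add: plist_def)
  have "x 0 = 0 \<and> x 1 = 0 \<and> x 2 = 0 \<and> x 3 = 0 \<and> x 4 = 0 \<and> x 5 = 0 \<and> x 6 = 0 \<and> x 7 = 0 \<and> x 8 = 0 \<and> x 9 = 0 \<and> x 10 = 0"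
    by (rule indep11[OF c M u h0 h1 h2 h3 h4 h5 h6 h7 h8 h9 h10])
  then show ?thesis by (auto simp: less_Suc_eq numeral_eq_Suc)
qed

lemma basis_BS:
  fixes k m :: int and c :: complex
  assumes c: "c \<noteq> 0" and m: "m \<noteq> 0" and u: "c * (of_int m)^2 \<noteq> 2"
  shows "is_basis (VLplus_wt k m (- k * m\<^sup>2 + 6)) (BS c m)"
proof -
  let ?W = "VLplus_wt k m (- k * m\<^sup>2 + 6)"
  have sub: "set (BS c m) \<subseteq> ?W"
    unfolding BS_def list.set insert_subset
    apply (intro conjI empty_subsetI)
    apply (rule comb_in_W, simp)+
    done
  have len: "length (BS c m) = 11" by (simp add: BS_def)
  have lc: "lincomb x (BS c m) p = (\<Sum>i<11. x i * (BS c m ! i) p)" for x p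
    by (simp add: lincomb_def len)
  have indep: "\<forall>i<11. x i = 0" if "\<forall>j<11. lincomb x (BS c m) (plist ! j, m) = 0" for x
    by (rule core_indep[OF c m u that])
  have part2: "\<forall>a. lincomb a (BS c m) = vzero \<longrightarrow> (\<forall>i<length (BS c m). a i = 0)"
  proof (rule allI, rule impI)
    fix a assume "lincomb a (BS c m) = vzero"
    then have "\<forall>j<11. lincomb a (BS c m) (plist ! j, m) = 0" by (simp add: vzero_def)
    then show "\<forall>i<length (BS c m). a i = 0" using indep len by simp
  qed
  have part3: "\<forall>v\<in>?W. \<exists>a. v = lincomb a (BS c m)"
  proof
    fix v assume v: "v \<in> ?W"
    define A where "A = (\<lambda>i j. (BS c m ! i) (plist ! j, m))"
    have inj: "\<forall>x. (\<forall>j<11. (\<Sum>i<11. x i * A i j) = 0) \<longrightarrow> (\<forall>i<11. x i = 0)"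
      using indep by (simp add: A_def lc)
    obtain x where hx: "\<forall>j<11. (\<Sum>i<11. x i * A i j) = v (plist ! j, m)"
      using square_surj[OF inj, of "\<lambda>j. v (plist ! j, m)"] by blast
    define d where "d = vadd v (vscale (-1) (lincomb x (BS c m)))"
    have dW: "d \<in> ?W" unfolding d_def using v lincomb_in_W[OF sub] W_add W_scale by blast
    have "\<forall>P. sum_mset P = 6 \<and> 0 \<notin># P \<longrightarrow> d (P, m) = 0"
    proof (intro allI impI)
      fix P :: "nat multiset" assume P: "sum_mset P = 6 \<and> 0 \<notin># P"
      then have "P \<in> set plist" using parts6 by blast
      then obtain j where j: "j < length plist" "P = plist ! j" by (metis in_set_conv_nth)
      have "j < 11" using j(1) by (simp add: plist_def)
      then have "lincomb x (BS c m) (P, m) = v (P, m)" using hx j(2) by (simp add: lc A_def)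
      then show "d (P, m) = 0" by (simp add: d_def vadd_def vscale_def)
    qed
    then have "d = vzero" using W_determined[OF m dW] by blast
    then have dz: "d p = 0" for p by (simp add: vzero_def)
    have vp: "v p = lincomb x (BS c m) p" for p using dz[of p] by (simp add: d_def vadd_def vscale_def)
    then have "v = lincomb x (BS c m)" by (simp add: fun_eq_iff)
    then show "\<exists>a. v = lincomb a (BS c m)" by blast
  qed
  show ?thesis unfolding is_basis_def using sub part2 part3 by blast
qed

theorem lemma4p2:
  fixes k m :: int
  assumes "k > 0" and "m > 0"
  shows "let c = (of_int (- 2 * k) :: complex); a = amode c; E = Evec m; F = Fvec m in
    is_basis (VLplus_wt k m (- k * m\<^sup>2 + 6))
      [Lmode c (-1) (a (-5) F),
       Lmode c (-1) (a (-4) (a (-1) E)),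
       Lmode c (-1) (a (-3) (a (-2) E)),
       Lmode c (-1) (a (-3) (a (-1) (a (-1) F))),
       Lmode c (-1) (a (-2) (a (-2) (a (-1) F))),
       Lmode c (-1) (a (-2) (a (-1) (a (-1) (a (-1) E)))),
       Lmode c (-1) (a (-1) (a (-1) (a (-1) (a (-1) (a (-1) F))))),
       Lmode c (-3) (a (-3) F),
       Lmode c (-3) (a (-2) (a (-1) E)),
       Lmode c (-3) (a (-1) (a (-1) (a (-1) F))),
       alpha_pow_mode c 4 (-3) E]"
proof -
  define c where "c = (of_int (- 2 * k) :: complex)"
  have c0: "c \<noteq> 0" using assms by (simp add: c_def)
  have m0: "m \<noteq> 0" using assms by simp
  have km: "k * m^2 > 0" using assms by simp
  have cu: "c * (of_int m)^2 = of_int (- 2 * k * m^2)" by (simp add: c_def)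
  have "- 2 * k * m^2 \<noteq> 2" using km by linarith
  then have u: "c * (of_int m)^2 \<noteq> 2" unfolding cu by (metis of_int_eq_iff of_int_numeral)
  show ?thesis
    unfolding Let_def c_def[symmetric]
    unfolding v1[OF c0 m0] v2[OF c0 m0] v3[OF c0 m0] v4[OF c0 m0] v5[OF c0 m0] v6[OF c0 m0]
      v7[OF c0 m0] v8[OF c0 m0] v9[OF c0 m0] v10[OF c0 m0] v11[OF c0 m0]
    using basis_BS[OF c0 m0 u, of k] unfolding BS_def .
qed

end
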